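(* Let $B,C\subset\mathbb{R}^d$ be closed convex sets with nonempty interiors and differentiable boundaries, with $B\cap C\neq\emptyset$. Let $x\in\partial B\cap\partial C$ be such that $n_B(x)\neq n_C(x)$, where $n_B(x),n_C(x)$ are the unit outer normals of $B$ and $C$ at $x$. Then there exist a point $a\in\operatorname{int}B\cap\{w:(w-x)\cdot n_C(x)>0\}$ and $\delta,s>0$ such that $$K\Big(x,\tfrac{a-x}{|a-x|},\delta,s\Big)\subset\operatorname{int}B\cup\{x\}\quad\text{and}\quad K\Big(x,-\tfrac{a-x}{|a-x|},\delta,s\Big)\subset\operatorname{int}C\cup\{x\}.$$
   Context: For $x_0,\xi\in\mathbb{R}^d$ with $|\xi|=1$, $\delta\in[0,2]$ and $s>0$: $K(x_0,\xi,\delta)=\{x\in\mathbb{R}^d\setminus\{x_0\}:\frac{x-x_0}{|x-x_0|}\cdot\xi\ge1-\delta\}\cup\{x_0\}$ and $K(x_0,\xi,\delta,s)=K(x_0,\xi,\delta)\cap B(x_0,s)$, where $B(x_0,s)$ is the open ball. *)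

theory Defs
  imports "HOL-Analysis.Analysis"
begin

definition Kcone :: "'a::euclidean_space \<Rightarrow> 'a \<Rightarrow> real \<Rightarrow> 'a set" where
  "Kcone x0 \<xi> \<delta> =
     {x. x \<noteq> x0 \<and> ((x - x0) /\<^sub>R norm (x - x0)) \<bullet> \<xi> \<ge> 1 - \<delta>} \<union> {x0}"

definition Kcone_s :: "'a::euclidean_space \<Rightarrow> 'a \<Rightarrow> real \<Rightarrow> real \<Rightarrow> 'a set" where
  "Kcone_s x0 \<xi> \<delta> s = Kcone x0 \<xi> \<delta> \<inter> ball x0 s"

definition outer_normals :: "'a::euclidean_space set \<Rightarrow> 'a \<Rightarrow> 'a set" where
  "outer_normals B x = {u. norm u = 1 \<and> (\<forall>y\<in>B. (y - x) \<bullet> u \<le> 0)}"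

text \<open>A convex set has differentiable boundary iff the outer unit normal is unique
  at every boundary point (unique supporting hyperplane).\<close>
definition differentiable_boundary :: "'a::euclidean_space set \<Rightarrow> bool" where
  "differentiable_boundary B \<longleftrightarrow> (\<forall>x\<in>frontier B. \<exists>!u. u \<in> outer_normals B x)"

definition outer_normal :: "'a::euclidean_space set \<Rightarrow> 'a \<Rightarrow> 'a" where
  "outer_normal B x = (THE u. u \<in> outer_normals B x)"

end

theory Submission
  imports Defs
begin


lemma sep_lemma:
  fixes B :: "'a::euclidean_space set"
  assumes "convex B" "interior B \<noteq> {}" "y \<notin> interior B"
  shows "\<exists>u. norm u = 1 \<and> (\<forall>z\<in>B. (z - y) \<bullet> u \<le> 0)"
proof -
  obtain a b where ab: "a \<noteq> 0" "\<forall>w\<in>{y}. a \<bullet> w \<le> b" "\<forall>w\<in>interior B. a \<bullet> w \<ge> b"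
    using separating_hyperplane_sets[of "{y}" "interior B"] assms
    by (auto simp: convex_interior)
  have "B \<subseteq> closure (interior B)"
    using convex_closure_interior[OF assms(1,2)] closure_subset by blast
  moreover have "closed {w. a \<bullet> w \<ge> b}" by (simp add: closed_halfspace_ge)
  moreover have "interior B \<subseteq> {w. a \<bullet> w \<ge> b}" using ab by auto
  ultimately have Bsub: "B \<subseteq> {w. a \<bullet> w \<ge> b}" by (meson closure_minimal subset_trans)
  define u where "u = - a /\<^sub>R norm a"
  have "norm u = 1" using ab by (simp add: u_def)
  moreover have "(z - y) \<bullet> u \<le> 0" if "z \<in> B" for z
  proof -
    have "a \<bullet> z \<ge> b" using Bsub that by auto
    hence "a \<bullet> (z - y) \<ge> 0" using ab by (simp add: inner_diff_right)
    thus ?thesis by (simp add: u_def inner_commute divide_nonneg_pos)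
  qed
  ultimately show ?thesis by blast
qed



lemma fip_lemma:
  fixes x v :: "'a::euclidean_space"
  assumes ne: "\<And>e. e > 0 \<Longrightarrow> \<exists>u. norm u = 1 \<and> (\<forall>z\<in>B. (z - x) \<bullet> u \<le> e) \<and> - e \<le> u \<bullet> v"
  shows "\<exists>u. norm u = 1 \<and> (\<forall>z\<in>B. (z - x) \<bullet> u \<le> 0) \<and> 0 \<le> u \<bullet> v"
proof -
  define G where "G e = {u. (\<forall>z\<in>B. (z - x) \<bullet> u \<le> e) \<and> - e \<le> u \<bullet> v}" for e :: real
  have Gm: "G e \<subseteq> G e'" if "e \<le> e'" for e e' using that by (force simp: G_def)
  have clG: "closed (G e)" for e
  proof -
    have "G e = (\<Inter>z\<in>B. {u. (z - x) \<bullet> u \<le> e}) \<inter> {u. v \<bullet> u \<ge> - e}"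
      by (auto simp: G_def inner_commute)
    thus ?thesis by (auto intro!: closed_INT closed_Int closed_halfspace_le closed_halfspace_ge)
  qed
  have "sphere 0 1 \<inter> \<Inter>(G ` {0<..}) \<noteq> {}"
  proof (rule compact_imp_fip)
    show "compact (sphere (0::'a) 1)" by simp
    show "closed T" if "T \<in> G ` {0<..}" for T using that clG by auto
    fix F' assume F': "finite F'" "F' \<subseteq> G ` {0<..}"
    show "sphere 0 1 \<inter> \<Inter>F' \<noteq> {}"
    proof (cases "F' = {}")
      case True
      have "(SOME i. i \<in> Basis) \<in> sphere (0::'a) 1" by (simp add: someI_ex SOME_Basis)
      then show ?thesis using True by auto
    next
      case False
      obtain E where E: "E \<subseteq> {0<..}" "F' = G ` E" "finite E"
        using F' by (meson finite_subset_image)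
      have Ene: "E \<noteq> {}" using False E by auto
      define m where "m = Min E"
      have mE: "m \<in> E" using E Ene by (simp add: m_def)
      have "m > 0" using mE E by auto
      then obtain u where u: "norm u = 1" "u \<in> G m" using ne by (auto simp: G_def)
      have "u \<in> G e" if "e \<in> E" for e using Gm[of m e] u E that by (simp add: m_def subset_iff)
      then have "u \<in> sphere 0 1 \<inter> \<Inter>F'" using u E by auto
      then show ?thesis by blast
    qed
  qed
  then obtain u where u0: "norm u = 1" "\<forall>e\<in>{0<..}. u \<in> G e" by auto
  have u: "norm u = 1" "\<And>e. e > 0 \<Longrightarrow> u \<in> G e" using u0 by auto
  have "(z - x) \<bullet> u \<le> 0" if "z \<in> B" for z
  proof (rule field_le_epsilon)
    fix e :: real assume "e > 0"
    then show "(z - x) \<bullet> u \<le> 0 + e" using u(2)[of e] that by (auto simp: G_def)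
  qed
  moreover have "0 \<le> u \<bullet> v"
  proof -
    have "- e \<le> u \<bullet> v" if "e > 0" for e using u(2)[OF that] by (auto simp: G_def)
    note h = this[of "- (u \<bullet> v) / 2"]
    show ?thesis by (rule ccontr) (use h in linarith)
  qed
  ultimately show ?thesis using u(1) by auto
qed



lemma cone_lemma:
  fixes B :: "'a::euclidean_space set"
  assumes cl: "closed B" and cv: "convex B" and ine: "interior B \<noteq> {}" and xf: "x \<in> frontier B"
    and nN: "n \<in> outer_normals B x" and uq: "\<forall>u\<in>outer_normals B x. u = n"
    and v1: "norm v = 1" and vn: "v \<bullet> n < 0"
  shows "\<exists>\<delta> s. 0 < \<delta> \<and> \<delta> \<le> 2 \<and> 0 < s \<and> Kcone_s x v \<delta> s \<subseteq> interior B \<union> {x}"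
proof (rule ccontr)
  assume H: "\<not> ?thesis"
  have H': "\<And>\<delta> s. 0 < \<delta> \<Longrightarrow> \<delta> \<le> 2 \<Longrightarrow> 0 < s \<Longrightarrow> \<not> Kcone_s x v \<delta> s \<subseteq> interior B \<union> {x}"
    using H by blast
  have xB: "x \<in> B" using xf cl frontier_subset_closed by blast
  have "\<exists>u. norm u = 1 \<and> (\<forall>z\<in>B. (z - x) \<bullet> u \<le> e) \<and> - e \<le> u \<bullet> v" if ep: "e > 0" for e
  proof -
    define \<delta> where "\<delta> = min 1 (e^2/2)"
    have d: "0 < \<delta>" "\<delta> \<le> 2" "2 * \<delta> \<le> e^2" using ep by (auto simp: \<delta>_def)
    have "\<not> Kcone_s x v \<delta> e \<subseteq> interior B \<union> {x}" by (rule H'[OF d(1,2) ep])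
    then obtain y where y: "y \<in> Kcone_s x v \<delta> e" "y \<notin> interior B" "y \<noteq> x" by auto
    define t where "t = norm (y - x)"
    define w where "w = (y - x) /\<^sub>R t"
    have t0: "t > 0" using y(3) by (simp add: t_def)
    have te: "t < e" using y(1) by (simp add: Kcone_s_def t_def dist_norm norm_minus_commute)
    have wv: "w \<bullet> v \<ge> 1 - \<delta>" using y(1,3) by (simp add: Kcone_s_def Kcone_def w_def t_def)
    have w1: "norm w = 1" using t0 by (simp add: w_def t_def)
    have yw: "y - x = t *\<^sub>R w" using t0 by (simp add: w_def)
    obtain u where u: "norm u = 1" "\<forall>z\<in>B. (z - y) \<bullet> u \<le> 0"
      using sep_lemma[OF cv ine y(2)] by blast
    have "(x - y) \<bullet> u \<le> 0" using u xB by blast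
    then have yu0: "(y - x) \<bullet> u \<ge> 0" by (simp add: inner_diff_left)
    have "(y - x) \<bullet> u \<le> norm (y - x) * norm u" by (rule norm_cauchy_schwarz)
    then have yut: "(y - x) \<bullet> u \<le> t" using u by (simp add: t_def)
    have A: "\<forall>z\<in>B. (z - x) \<bullet> u \<le> e"
    proof
      fix z assume "z \<in> B"
      then have "(z - y) \<bullet> u \<le> 0" using u by blast
      moreover have "(z - x) \<bullet> u = (z - y) \<bullet> u + (y - x) \<bullet> u" by (simp add: inner_diff_left)
      ultimately show "(z - x) \<bullet> u \<le> e" using yut te by linarith
    qed
    have wu: "w \<bullet> u \<ge> 0" using yu0 t0 yw by (simp add: zero_le_mult_iff)
    have "norm (v - w) ^ 2 = 2 - 2 * (w \<bullet> v)"
      proof -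
      have "v \<bullet> v = 1" "w \<bullet> w = 1" using v1 w1 by (metis norm_eq_1)+
      then show ?thesis by (simp add: power2_norm_eq_inner inner_diff_left inner_diff_right inner_commute)
    qed
    also have "\<dots> \<le> e ^ 2" using wv d(3) by linarith
    finally have sq: "norm (v - w) ^ 2 \<le> e ^ 2" .
    have "norm (v - w) \<le> e" using power2_le_imp_le[OF sq] ep by linarith
    moreover have "u \<bullet> (v - w) \<ge> - norm (v - w)"
    proof -
      have "\<bar>u \<bullet> (v - w)\<bar> \<le> norm u * norm (v - w)" by (rule Cauchy_Schwarz_ineq2)
      then show ?thesis using u by simp
    qed
    moreover have "u \<bullet> v = u \<bullet> w + u \<bullet> (v - w)" by (simp add: inner_diff_right)
    moreover have "u \<bullet> w \<ge> 0" using wu by (simp add: inner_commute)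
    ultimately have "- e \<le> u \<bullet> v" by linarith
    with A u show ?thesis by blast
  qed
  then obtain u where u: "norm u = 1" "\<forall>z\<in>B. (z - x) \<bullet> u \<le> 0" "0 \<le> u \<bullet> v"
    using fip_lemma[of B x v] by blast
  then have "u \<in> outer_normals B x" by (simp add: outer_normals_def)
  then have "u = n" using uq by blast
  then show False using u vn by (simp add: inner_commute)
qed



lemma Kcone_mono:
  assumes "\<delta> \<le> \<delta>'" "s \<le> s'"
  shows "Kcone_s x v \<delta> s \<subseteq> Kcone_s x v \<delta>' s'"
  using assms by (auto simp: Kcone_s_def Kcone_def)

lemma normal_props:
  assumes "differentiable_boundary B" "x \<in> frontier B"
  shows "outer_normal B x \<in> outer_normals B x"
    "\<forall>u\<in>outer_normals B x. u = outer_normal B x"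
proof -
  have ex: "\<exists>!u. u \<in> outer_normals B x" using assms by (auto simp: differentiable_boundary_def)
  show "outer_normal B x \<in> outer_normals B x" unfolding outer_normal_def by (rule theI'[OF ex])
  then show "\<forall>u\<in>outer_normals B x. u = outer_normal B x" using ex by blast
qed

theorem lemma2p16:
  fixes B C :: "'a::euclidean_space set" and x :: 'a
  assumes "closed B" "convex B" "interior B \<noteq> {}" "differentiable_boundary B"
    and "closed C" "convex C" "interior C \<noteq> {}" "differentiable_boundary C"
    and "B \<inter> C \<noteq> {}"
    and "x \<in> frontier B" "x \<in> frontier C"
    and "outer_normal B x \<noteq> outer_normal C x"
  shows "\<exists>a \<delta> s. a \<in> interior B \<and> (a - x) \<bullet> outer_normal C x > 0 \<and>
           0 < \<delta> \<and> \<delta> \<le> 2 \<and> 0 < s \<and>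
           Kcone_s x ((a - x) /\<^sub>R norm (a - x)) \<delta> s \<subseteq> interior B \<union> {x} \<and>
           Kcone_s x (- ((a - x) /\<^sub>R norm (a - x))) \<delta> s \<subseteq> interior C \<union> {x}"
proof -
  define nB where "nB = outer_normal B x"
  define nC where "nC = outer_normal C x"
  note NB = normal_props[OF assms(4,10), folded nB_def]
  note NC = normal_props[OF assms(8,11), folded nC_def]
  have nB1: "nB \<bullet> nB = 1" using NB(1) by (simp add: outer_normals_def norm_eq_1)
  have nC1: "nC \<bullet> nC = 1" using NC(1) by (simp add: outer_normals_def norm_eq_1)
  have ne: "nB \<noteq> nC" using assms(12) by (simp add: nB_def nC_def)
  define k where "k = norm (nC - nB)"
  have k0: "k > 0" using ne by (simp add: k_def)
  have "k ^ 2 = 2 - 2 * (nB \<bullet> nC)"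
    using nB1 nC1 by (simp add: k_def power2_norm_eq_inner inner_diff_left inner_diff_right inner_commute)
  moreover have "k ^ 2 > 0" using k0 by simp
  ultimately have bc: "nB \<bullet> nC < 1" by linarith
  define v where "v = (nC - nB) /\<^sub>R k"
  have v1: "norm v = 1" using k0 by (simp add: v_def k_def)
  have "v \<bullet> nB = (nC \<bullet> nB - 1) / k" using nB1 by (simp add: v_def inner_diff_left divide_inverse mult.commute)
  then have vB: "v \<bullet> nB < 0" using bc k0 by (simp add: divide_neg_pos inner_commute)
  have "v \<bullet> nC = (1 - nB \<bullet> nC) / k" using nC1 by (simp add: v_def inner_diff_left divide_inverse mult.commute)
  then have vC: "v \<bullet> nC > 0" using bc k0 by simp
  have vC': "(- v) \<bullet> nC < 0" using vC by simp
  have mv1: "norm (- v) = 1" using v1 by simp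
  obtain d1 s1 where D1: "0 < d1" "d1 \<le> 2" "0 < s1" "Kcone_s x v d1 s1 \<subseteq> interior B \<union> {x}"
    using cone_lemma[OF assms(1,2,3,10) NB v1 vB] by blast
  obtain d2 s2 where D2: "0 < d2" "d2 \<le> 2" "0 < s2" "Kcone_s x (- v) d2 s2 \<subseteq> interior C \<union> {x}"
    using cone_lemma[OF assms(5,6,7,11) NC mv1 vC'] by blast
  define d where "d = min d1 d2"
  define s where "s = min s1 s2"
  have s0: "s > 0" using D1 D2 by (simp add: s_def)
  define a where "a = x + (s / 2) *\<^sub>R v"
  have ax: "a - x = (s / 2) *\<^sub>R v" by (simp add: a_def)
  have nax: "norm (a - x) = s / 2" using ax v1 s0 by simp
  have dir: "(a - x) /\<^sub>R norm (a - x) = v" using nax ax s0 by simp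
  have KB: "Kcone_s x v d s \<subseteq> interior B \<union> {x}"
    using Kcone_mono[of d d1 s s1 x v] D1 by (auto simp: d_def s_def)
  have KC: "Kcone_s x (- v) d s \<subseteq> interior C \<union> {x}"
    using Kcone_mono[of d d2 s s2 x "- v"] D2 by (auto simp: d_def s_def)
  have anx: "a \<noteq> x" using nax s0 by auto
  have "v \<bullet> v = 1" using v1 by (simp add: norm_eq_1)
  then have "((a - x) /\<^sub>R norm (a - x)) \<bullet> v \<ge> 1 - d" unfolding dir using D1 D2 by (simp add: d_def)
  then have "a \<in> Kcone x v d" using anx by (simp add: Kcone_def)
  moreover have "a \<in> ball x s" using nax s0 by (simp add: dist_norm norm_minus_commute)
  ultimately have "a \<in> Kcone_s x v d s" by (simp add: Kcone_s_def)
  then have aB: "a \<in> interior B" using KB anx by blast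
  have pos: "(a - x) \<bullet> nC > 0" using ax vC s0 by simp
  show ?thesis
    apply (rule exI[of _ a], rule exI[of _ d], rule exI[of _ s])
    using aB pos KB KC dir D1 D2 s0 by (auto simp: d_def nC_def)
qed


end
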